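(* Let $\gamma>0$, $c_u>0$, $c_a>0$, $c_s>0$ and $R^*=\log\left(\frac{c_u}{c_a}+1\right)$. Consider the optimization problem $$\min_{0\le s\le 1,\ T\ge 0}\ J_i(s,T):=\gamma(1-s)R^*+c_s\,(sR^*-T)$$ subject to: (IR-$u$) $T\le R^*$; (IC-$u$) $s\ge T/R^*$; (IR-$i$) $T-sR^*\ge 0$; (F-$i$) $s>1-\frac{1}{\gamma R^*}$. Then the optimal insurance policy is $s^*=1$, $T^*=R^*=\log\left(\frac{c_u}{c_a}+1\right)$.
   Context: $\log$ is the natural logarithm. $s$ is the coverage level and $T$ the subscription fee of an insurance policy; $c_s$ is a trade-off parameter of the insurer between the user's average effective loss and the insurer's profit. *)

theory Defs
  imports Complex_Main
begin

definition Rstar :: "real \<Rightarrow> real \<Rightarrow> real" where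
  "Rstar c_u c_a = ln (c_u / c_a + 1)"

definition J_i :: "real \<Rightarrow> real \<Rightarrow> real \<Rightarrow> real \<Rightarrow> real \<Rightarrow> real" where
  "J_i \<gamma> c_s R s T = \<gamma> * (1 - s) * R + c_s * (s * R - T)"

definition feasible :: "real \<Rightarrow> real \<Rightarrow> real \<Rightarrow> real \<Rightarrow> bool" where
  "feasible \<gamma> R s T \<longleftrightarrow>
     0 \<le> s \<and> s \<le> 1 \<and> T \<ge> 0 \<and>
     T \<le> R \<and>
     s \<ge> T / R \<and>
     T - s * R \<ge> 0 \<and>
     s > 1 - 1 / (\<gamma> * R)"

end

theory Submission
  imports Defs
begin

lemma feas_char:
  assumes R: "R > 0"
  shows "feasible \<gamma> R s T \<Longrightarrow> T = s * R"
proof -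
  assume f: "feasible \<gamma> R s T"
  hence "T / R \<le> s" "T - s*R \<ge> 0" by (auto simp: feasible_def)
  hence "T \<le> s * R" using R by (simp add: divide_le_eq)
  thus ?thesis using \<open>T - s*R \<ge> 0\<close> by simp
qed

theorem proposition4:
  fixes \<gamma> c_u c_a c_s :: real
  assumes "\<gamma> > 0" and "c_u > 0" and "c_a > 0" and "c_s > 0"
  shows "{(s, T). feasible \<gamma> (Rstar c_u c_a) s T \<and>
           (\<forall>s' T'. feasible \<gamma> (Rstar c_u c_a) s' T' \<longrightarrow>
              J_i \<gamma> c_s (Rstar c_u c_a) s T \<le> J_i \<gamma> c_s (Rstar c_u c_a) s' T')}
         = {(1, ln (c_u / c_a + 1))}"
proof -
  define R where "R = Rstar c_u c_a"
  have "c_u / c_a > 0" using assms by simp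
  hence R: "R > 0" unfolding R_def Rstar_def by simp
  have gR: "\<gamma> * R > 0" using R assms by simp
  have f1: "feasible \<gamma> R 1 R" unfolding feasible_def using R gR by simp
  have J1: "J_i \<gamma> c_s R 1 R = 0" by (simp add: J_i_def)
  have Jf: "J_i \<gamma> c_s R s T = \<gamma> * (1 - s) * R" if "feasible \<gamma> R s T" for s T
    using feas_char[OF R that] by (simp add: J_i_def)
  have Jnn: "J_i \<gamma> c_s R s T \<ge> 0" if "feasible \<gamma> R s T" for s T
    using Jf[OF that] that assms R by (simp add: feasible_def)
  have "{(s, T). feasible \<gamma> R s T \<and>
           (\<forall>s' T'. feasible \<gamma> R s' T' \<longrightarrow>
              J_i \<gamma> c_s R s T \<le> J_i \<gamma> c_s R s' T')} = {(1, R)}"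
  proof (safe)
    fix s T assume f: "feasible \<gamma> R s T" and opt: "\<forall>s' T'. feasible \<gamma> R s' T' \<longrightarrow>
              J_i \<gamma> c_s R s T \<le> J_i \<gamma> c_s R s' T'"
    have "J_i \<gamma> c_s R s T \<le> 0" using opt f1 J1 by force
    hence "\<gamma> * (1 - s) * R \<le> 0" using Jf[OF f] by simp
    hence "(1 - s) * (\<gamma> * R) \<le> 0" by (simp add: algebra_simps)
    hence "1 - s \<le> 0" using gR by (metis mult_le_0_iff not_le)
    hence s: "s = 1" using f by (simp add: feasible_def)
    thus "s = 1" .
    show "T = R" using feas_char[OF R f] s by simp
  next
    show "feasible \<gamma> R 1 R" by (rule f1)
  next
    fix s' T' assume "feasible \<gamma> R s' T'"
    thus "J_i \<gamma> c_s R 1 R \<le> J_i \<gamma> c_s R s' T'" using J1 Jnn by simp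
  qed
  thus ?thesis unfolding R_def by (simp add: Rstar_def)
qed

end
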